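(* Let $Q$ be a complete quiver and let $j$ be a mutable vertex which is cycle-preserving for $Q$ and is red or green. Then every vertex that is red or green in $Q$ is red or green in $\mu_j(Q)$. Moreover, for every mutable vertex $k$ that is neither red nor green in $Q$, either the numbers $b_{ku}$ for all frozen $u$ are the same in $Q$ and in $\mu_j(Q)$, or $k$ is red or green in $\mu_j(Q)$.
   Context: A quiver is a finite directed multigraph with no loops and no oriented 2-cycles, whose vertex set is partitioned into mutable and frozen vertices; arrows between two frozen vertices are ignored. $b_{ik}$ = number of arrows $i\to k$ minus number of arrows $k\to i$; $Q|_S$ is the induced subquiver on $S$. Mutation $\mu_j$ at mutable $j$: for each path $i\to j\to k$ add $b_{ij}b_{jk}$ arrows $i\to k$, reverse all arrows at $j$, cancel 2-cycles. Complete: at least one arrow between every pair of vertices at least one of which is mutable. A 3-vertex (sub)quiver is an oriented 3-cycle if it has at most one frozen vertex and its underlying directed graph is not acyclic. A mutable vertex $j$ is cycle-preserving for $Q$ if whenever $Q|_{\{i,j,k\}}$ is an oriented 3-cycle containing $j$, so is $\mu_j(Q)|_{\{i,j,k\}}$. A mutable vertex adjacent to at least one frozen vertex is red (resp. green) if all arrows between it and frozen vertices point towards (resp. away from) it. *)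

theory Defs
  imports Main
begin

text \<open>A quiver (finite, no loops, no oriented 2-cycles) is encoded by its vertex set,
its set of frozen vertices and its exchange matrix b, where b i k = (#arrows i->k) - (#arrows k->i).
Since there are no 2-cycles, the number of arrows i->k is max (b i k) 0.
Arrows between two frozen vertices are ignored, so b vanishes on frozen-frozen pairs.\<close>

record 'v quiver =
  verts :: "'v set"
  frozen :: "'v set"
  bmat :: "'v \<Rightarrow> 'v \<Rightarrow> int"

definition mutable :: "'v quiver \<Rightarrow> 'v set" where
  "mutable Q = verts Q - frozen Q"

definition wf_quiver :: "'v quiver \<Rightarrow> bool" where
  "wf_quiver Q \<longleftrightarrow> finite (verts Q) \<and> frozen Q \<subseteq> verts Q
     \<and> (\<forall>i k. bmat Q i k = - bmat Q k i)
     \<and> (\<forall>i k. i \<notin> verts Q \<or> k \<notin> verts Q \<longrightarrow> bmat Q i k = 0)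
     \<and> (\<forall>i k. i \<in> frozen Q \<and> k \<in> frozen Q \<longrightarrow> bmat Q i k = 0)"

definition arrows :: "'v quiver \<Rightarrow> 'v \<Rightarrow> 'v \<Rightarrow> int" where
  "arrows Q i k = max (bmat Q i k) 0"

text \<open>Mutation at j: for each path i->j->k add (#i->j)(#j->k) arrows i->k, reverse all arrows
at j, cancel 2-cycles (the net count below), and ignore frozen-frozen arrows.\<close>
definition mutate :: "'v \<Rightarrow> 'v quiver \<Rightarrow> 'v quiver" where
  "mutate j Q = Q \<lparr> bmat := (\<lambda>i k.
      if i = j \<or> k = j then - bmat Q i k
      else if i \<in> frozen Q \<and> k \<in> frozen Q then 0
      else bmat Q i k + arrows Q i j * arrows Q j k - arrows Q k j * arrows Q j i) \<rparr>"

definition complete_quiver :: "'v quiver \<Rightarrow> bool" where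
  "complete_quiver Q \<longleftrightarrow> (\<forall>x\<in>verts Q. \<forall>y\<in>verts Q. x \<noteq> y \<and> (x \<in> mutable Q \<or> y \<in> mutable Q)
       \<longrightarrow> bmat Q x y \<noteq> 0)"

definition oriented_3cycle :: "'v quiver \<Rightarrow> 'v set \<Rightarrow> bool" where
  "oriented_3cycle Q S \<longleftrightarrow> S \<subseteq> verts Q \<and> card S = 3 \<and> card (S \<inter> frozen Q) \<le> 1
     \<and> \<not> acyclic {(x, y). x \<in> S \<and> y \<in> S \<and> \<not> (x \<in> frozen Q \<and> y \<in> frozen Q) \<and> bmat Q x y > 0}"

definition cycle_preserving :: "'v quiver \<Rightarrow> 'v \<Rightarrow> bool" where
  "cycle_preserving Q j \<longleftrightarrow> j \<in> mutable Q \<and>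
     (\<forall>i k. oriented_3cycle Q {i, j, k} \<longrightarrow> oriented_3cycle (mutate j Q) {i, j, k})"

definition red :: "'v quiver \<Rightarrow> 'v \<Rightarrow> bool" where
  "red Q v \<longleftrightarrow> v \<in> mutable Q \<and> (\<exists>u\<in>frozen Q. bmat Q v u \<noteq> 0)
     \<and> (\<forall>u\<in>frozen Q. arrows Q v u = 0)"

definition green :: "'v quiver \<Rightarrow> 'v \<Rightarrow> bool" where
  "green Q v \<longleftrightarrow> v \<in> mutable Q \<and> (\<exists>u\<in>frozen Q. bmat Q v u \<noteq> 0)
     \<and> (\<forall>u\<in>frozen Q. arrows Q u v = 0)"

end

theory Submission
  imports Defs
begin

lemma acyc_rank:
  fixes f :: "'a \<Rightarrow> nat"
  assumes "r \<subseteq> {(x,y). f x < f y}"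
  shows "acyclic r"
proof -
  have "f x < f y" if "(x, y) \<in> r\<^sup>+" for x y
    using that by (induct rule: trancl.induct) (use assms in auto)
  then show ?thesis unfolding acyclic_def by blast
qed

lemma mut_verts[simp]: "verts (mutate j Q) = verts Q" "frozen (mutate j Q) = frozen Q"
  by (simp_all add: mutate_def)

lemma mut_b: "bmat (mutate j Q) i k = (if i = j \<or> k = j then - bmat Q i k
      else if i \<in> frozen Q \<and> k \<in> frozen Q then 0
      else bmat Q i k + arrows Q i j * arrows Q j k - arrows Q k j * arrows Q j i)"
  by (simp add: mutate_def)

lemma mut_antisym:
  assumes "wf_quiver Q"
  shows "bmat (mutate j Q) i k = - bmat (mutate j Q) k i"
proof -
  have "bmat Q i k = - bmat Q k i" using assms unfolding wf_quiver_def by blast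
  then show ?thesis unfolding mut_b by (simp add: algebra_simps)
qed

lemma mut_diag:
  assumes "wf_quiver Q"
  shows "bmat (mutate j Q) i i = 0"
  using mut_antisym[OF assms, of j i i] by simp

lemma cyc:
  assumes wf: "wf_quiver Q" and cp: "cycle_preserving Q j"
    and av: "a \<in> verts Q" and cv: "c \<in> verts Q"
    and d: "a \<noteq> j" "c \<noteq> j" "a \<noteq> c"
    and nf: "\<not> (a \<in> frozen Q \<and> c \<in> frozen Q)"
    and b1: "bmat Q a j > 0" and b2: "bmat Q j c > 0" and b3: "bmat Q c a > 0"
  shows "bmat (mutate j Q) a c > 0"
proof (rule ccontr)
  assume neg: "\<not> bmat (mutate j Q) a c > 0"
  have jm: "j \<in> mutable Q" using cp unfolding cycle_preserving_def by auto
  hence jv: "j \<in> verts Q" and jf: "j \<notin> frozen Q" unfolding mutable_def by auto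
  have card3: "card {a, j, c} = 3" using d by auto
  have cf: "card ({a, j, c} \<inter> frozen Q) \<le> 1"
  proof -
    have "{a, j, c} \<inter> frozen Q \<subseteq> {a} \<or> {a, j, c} \<inter> frozen Q \<subseteq> {c}"
      using nf jf by auto
    moreover have "card ({a, j, c} \<inter> frozen Q) \<le> 1" if "{a, j, c} \<inter> frozen Q \<subseteq> {x}" for x
      using card_mono[OF _ that] by simp
    ultimately show ?thesis by blast
  qed
  let ?r = "{(x, y). x \<in> {a, j, c} \<and> y \<in> {a, j, c} \<and> \<not> (x \<in> frozen Q \<and> y \<in> frozen Q) \<and> bmat Q x y > 0}"
  have "(a, j) \<in> ?r" "(j, c) \<in> ?r" "(c, a) \<in> ?r" using b1 b2 b3 jf nf by auto
  hence "(a, a) \<in> ?r\<^sup>+" by (meson r_into_trancl trancl_into_trancl)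
  hence "\<not> acyclic ?r" unfolding acyclic_def by blast
  moreover have "{a, j, c} \<subseteq> verts Q" using av cv jv by blast
  ultimately have "oriented_3cycle Q {a, j, c}"
    unfolding oriented_3cycle_def using card3 cf by blast
  moreover have "\<forall>i k. oriented_3cycle Q {i, j, k} \<longrightarrow> oriented_3cycle (mutate j Q) {i, j, k}"
    using cp unfolding cycle_preserving_def by blast
  ultimately have o: "oriented_3cycle (mutate j Q) {a, j, c}" by blast
  let ?r' = "{(x, y). x \<in> {a, j, c} \<and> y \<in> {a, j, c} \<and> \<not> (x \<in> frozen Q \<and> y \<in> frozen Q) \<and> bmat (mutate j Q) x y > 0}"
  define f :: "_ \<Rightarrow> nat" where "f x = (if x = c then 0 else if x = j then 1 else 2)" for x
  have wf': "\<forall>i k. bmat Q i k = - bmat Q k i" using wf unfolding wf_quiver_def by blast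
  have e1: "bmat (mutate j Q) a j < 0" using b1 by (simp add: mut_b)
  have e2: "bmat (mutate j Q) j c < 0" using b2 by (simp add: mut_b)
  have e3: "bmat (mutate j Q) j a > 0" using b1 wf'[rule_format, of j a] by (simp add: mut_b)
  have "?r' \<subseteq> {(x,y). f x < f y}"
  proof
    fix p assume "p \<in> ?r'"
    then obtain x y where p: "p = (x,y)" "x \<in> {a,j,c}" "y \<in> {a,j,c}" "bmat (mutate j Q) x y > 0" by blast
    have fa: "f a = 2" "f j = 1" "f c = 0" using d unfolding f_def by auto
    have z: "bmat (mutate j Q) x x = 0" for x using mut_diag[OF wf] .
    have e4: "bmat (mutate j Q) c j > 0" using e2 mut_antisym[OF wf, of j c j] by simp
    have xs: "x = a \<or> x = j \<or> x = c" using p(2) by blast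
    have ys: "y = a \<or> y = j \<or> y = c" using p(3) by blast
    have "f x < f y" using xs ys p(4) fa z[of x] e1 e2 neg by (elim disjE) simp_all
    then show "p \<in> {(x,y). f x < f y}" using p(1) by simp
  qed
  hence "acyclic ?r'" by (rule acyc_rank)
  moreover have "\<not> acyclic ?r'" using o unfolding oriented_3cycle_def mut_verts by blast
  ultimately show False by blast
qed

lemma rg_iff:
  assumes "\<forall>i k. bmat Q i k = - bmat Q k i"
  shows "red Q v \<longleftrightarrow> v \<in> mutable Q \<and> (\<exists>u\<in>frozen Q. bmat Q v u \<noteq> 0) \<and> (\<forall>u\<in>frozen Q. bmat Q v u \<le> 0)"
    "green Q v \<longleftrightarrow> v \<in> mutable Q \<and> (\<exists>u\<in>frozen Q. bmat Q v u \<noteq> 0) \<and> (\<forall>u\<in>frozen Q. bmat Q v u \<ge> 0)"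
proof -
  have h1: "(max (bmat Q v u) 0 = 0) = (bmat Q v u \<le> 0)" for u by linarith
  have h2: "(max (bmat Q u v) 0 = 0) = (bmat Q v u \<ge> 0)" for u
    using assms[rule_format, of u v] by linarith
  show "red Q v \<longleftrightarrow> v \<in> mutable Q \<and> (\<exists>u\<in>frozen Q. bmat Q v u \<noteq> 0) \<and> (\<forall>u\<in>frozen Q. bmat Q v u \<le> 0)"
    unfolding red_def arrows_def h1 by (rule refl)
  show "green Q v \<longleftrightarrow> v \<in> mutable Q \<and> (\<exists>u\<in>frozen Q. bmat Q v u \<noteq> 0) \<and> (\<forall>u\<in>frozen Q. bmat Q v u \<ge> 0)"
    unfolding green_def arrows_def h2 by (rule refl)
qed

lemma key:
  assumes wf: "wf_quiver Q" and comp: "complete_quiver Q" and cp: "cycle_preserving Q j"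
    and rg: "red Q j \<or> green Q j"
    and vm: "v \<in> mutable Q" and vj: "v \<noteq> j"
  shows "(\<forall>u\<in>frozen Q. bmat (mutate j Q) v u = bmat Q v u) \<or> (\<forall>u\<in>frozen Q. bmat (mutate j Q) v u > 0)
     \<or> (\<forall>u\<in>frozen Q. bmat (mutate j Q) v u < 0)"
proof -
  have as: "\<forall>i k. bmat Q i k = - bmat Q k i" and fv: "frozen Q \<subseteq> verts Q"
    using wf unfolding wf_quiver_def by blast+
  have asy: "bmat Q x y = - bmat Q y x" for x y using as by blast
  have jm: "j \<in> mutable Q" using cp unfolding cycle_preserving_def by blast
  hence jv: "j \<in> verts Q" and jf: "j \<notin> frozen Q" unfolding mutable_def by auto
  have vv: "v \<in> verts Q" and vf: "v \<notin> frozen Q" using vm unfolding mutable_def by auto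
  have cm: "\<And>x y. x \<in> verts Q \<Longrightarrow> y \<in> verts Q \<Longrightarrow> x \<noteq> y \<Longrightarrow> x \<in> mutable Q \<or> y \<in> mutable Q \<Longrightarrow> bmat Q x y \<noteq> 0"
    using comp unfolding complete_quiver_def by blast
  have vjnz: "bmat Q v j \<noteq> 0" using cm[OF vv jv vj] vm by blast
  have formula: "\<And>u. u \<in> frozen Q \<Longrightarrow> bmat (mutate j Q) v u = bmat Q v u + arrows Q v j * arrows Q j u - arrows Q u j * arrows Q j v"
    using vj jf vf by (auto simp: mut_b)
  have ju: "\<And>u. u \<in> frozen Q \<Longrightarrow> bmat Q j u \<noteq> 0 \<and> u \<noteq> j \<and> u \<noteq> v \<and> u \<in> verts Q"
    using cm jv jm fv jf vf by blast
  have vu: "\<And>u. u \<in> frozen Q \<Longrightarrow> bmat Q v u \<noteq> 0"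
    using cm vv vm fv jf vf by blast
  from rg show ?thesis
  proof
    assume r: "red Q j"
    have jneg: "bmat Q j u < 0" if u: "u \<in> frozen Q" for u
    proof -
      have "bmat Q j u \<le> 0" using r u unfolding rg_iff(1)[OF as] by blast
      then show ?thesis using ju[OF u] by linarith
    qed
    have a0: "arrows Q j u = 0" if u: "u \<in> frozen Q" for u
      using jneg[OF u] unfolding arrows_def by linarith
    have a1: "arrows Q u j = bmat Q u j" if u: "u \<in> frozen Q" for u
      using jneg[OF u] asy[of u j] unfolding arrows_def by linarith
    show ?thesis
    proof (cases "bmat Q v j > 0")
      case True
      hence "arrows Q j v = 0" using asy[of j v] unfolding arrows_def by linarith
      hence "\<forall>u\<in>frozen Q. bmat (mutate j Q) v u = bmat Q v u"
        using formula a0 by simp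
      then show ?thesis by simp
    next
      case False
      hence jv0: "bmat Q j v > 0" using vjnz asy[of j v] by linarith
      hence ajv: "arrows Q j v = bmat Q j v" unfolding arrows_def by linarith
      have "\<forall>u\<in>frozen Q. bmat (mutate j Q) v u < 0"
      proof
        fix u assume u: "u \<in> frozen Q"
        have f: "bmat (mutate j Q) v u = bmat Q v u - bmat Q u j * bmat Q j v"
          using formula[OF u] a0[OF u] a1[OF u] ajv by simp
        have uj: "bmat Q u j > 0" using jneg[OF u] asy[of u j] by linarith
        show "bmat (mutate j Q) v u < 0"
        proof (cases "bmat Q v u > 0")
          case True
          have "bmat (mutate j Q) u v > 0"
            using cyc[OF wf cp, of u v] ju[OF u] vv vj vf uj jv0 True by blast
          then show ?thesis using mut_antisym[OF wf, of j v u] by linarith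
        next
          case False
          hence "bmat Q v u < 0" using vu[OF u] by linarith
          moreover have "bmat Q u j * bmat Q j v > 0" using uj jv0 by simp
          ultimately show ?thesis using f by linarith
        qed
      qed
      then show ?thesis by blast
    qed
  next
    assume g: "green Q j"
    have jpos: "bmat Q j u > 0" if u: "u \<in> frozen Q" for u
    proof -
      have "bmat Q j u \<ge> 0" using g u unfolding rg_iff(2)[OF as] by blast
      then show ?thesis using ju[OF u] by linarith
    qed
    have a0: "arrows Q u j = 0" if u: "u \<in> frozen Q" for u
      using jpos[OF u] asy[of u j] unfolding arrows_def by linarith
    have a1: "arrows Q j u = bmat Q j u" if u: "u \<in> frozen Q" for u
      using jpos[OF u] unfolding arrows_def by linarith
    show ?thesis
    proof (cases "bmat Q v j > 0")
      case False
      hence "arrows Q v j = 0" unfolding arrows_def by linarith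
      hence "\<forall>u\<in>frozen Q. bmat (mutate j Q) v u = bmat Q v u"
        using formula a0 by simp
      then show ?thesis by simp
    next
      case True
      hence avj: "arrows Q v j = bmat Q v j" unfolding arrows_def by linarith
      have "\<forall>u\<in>frozen Q. bmat (mutate j Q) v u > 0"
      proof
        fix u assume u: "u \<in> frozen Q"
        have f: "bmat (mutate j Q) v u = bmat Q v u + bmat Q v j * bmat Q j u"
          using formula[OF u] a0[OF u] a1[OF u] avj by simp
        show "bmat (mutate j Q) v u > 0"
        proof (cases "bmat Q v u > 0")
          case False
          hence "bmat Q u v > 0" using vu[OF u] asy[of u v] by linarith
          then show ?thesis
            using cyc[OF wf cp, of v u] ju[OF u] vv vj vf jpos[OF u] True by blast
        next
          case c: True
          moreover have "bmat Q v j * bmat Q j u > 0" using True jpos[OF u] by simp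
          ultimately show ?thesis using f by linarith
        qed
      qed
      then show ?thesis by blast
    qed
  qed
qed

theorem mainTheorem5:
  fixes Q :: "'v quiver" and j :: 'v
  assumes "wf_quiver Q"
    and "complete_quiver Q"
    and "j \<in> mutable Q"
    and "cycle_preserving Q j"
    and "red Q j \<or> green Q j"
  shows "(\<forall>v. red Q v \<or> green Q v \<longrightarrow> red (mutate j Q) v \<or> green (mutate j Q) v)
    \<and> (\<forall>k\<in>mutable Q. \<not> (red Q k \<or> green Q k) \<longrightarrow>
         (\<forall>u\<in>frozen Q. bmat (mutate j Q) k u = bmat Q k u) \<or> red (mutate j Q) k \<or> green (mutate j Q) k)"
proof -
  have as: "\<forall>i k. bmat Q i k = - bmat Q k i" using assms(1) unfolding wf_quiver_def by blast
  have as': "\<forall>i k. bmat (mutate j Q) i k = - bmat (mutate j Q) k i" using mut_antisym[OF assms(1)] by blast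
  have mm: "mutable (mutate j Q) = mutable Q" by (simp add: mutable_def)
  have jf: "j \<notin> frozen Q" using assms(3) unfolding mutable_def by auto
  note R = rg_iff[OF as] and R' = rg_iff[OF as'] 
  have gen: "red (mutate j Q) v \<or> green (mutate j Q) v"
    if v: "v \<in> mutable Q" "v \<noteq> j" and ne: "frozen Q \<noteq> {}"
      and h: "\<not> (\<forall>u\<in>frozen Q. bmat (mutate j Q) v u = bmat Q v u)" for v
  proof -
    from key[OF assms(1,2,4,5) v] h
    have dd: "(\<forall>u\<in>frozen Q. bmat (mutate j Q) v u > 0) \<or> (\<forall>u\<in>frozen Q. bmat (mutate j Q) v u < 0)" by simp
    obtain u0 where u0: "u0 \<in> frozen Q" using ne by blast
    from dd show ?thesis
    proof
      assume a: "\<forall>u\<in>frozen Q. bmat (mutate j Q) v u > 0"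
      have "green (mutate j Q) v" unfolding R' mm
      proof (intro conjI)
        show "v \<in> mutable Q" using v(1) .
        show "\<exists>u\<in>frozen (mutate j Q). bmat (mutate j Q) v u \<noteq> 0" using a u0 by force
        show "\<forall>u\<in>frozen (mutate j Q). bmat (mutate j Q) v u \<ge> 0" using a by force
      qed
      then show ?thesis by blast
    next
      assume a: "\<forall>u\<in>frozen Q. bmat (mutate j Q) v u < 0"
      have "red (mutate j Q) v" unfolding R' mm
      proof (intro conjI)
        show "v \<in> mutable Q" using v(1) .
        show "\<exists>u\<in>frozen (mutate j Q). bmat (mutate j Q) v u \<noteq> 0" using a u0 by force
        show "\<forall>u\<in>frozen (mutate j Q). bmat (mutate j Q) v u \<le> 0" using a by force
      qed
      then show ?thesis by blast
    qed
  qed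
  have p1: "red (mutate j Q) v \<or> green (mutate j Q) v" if h: "red Q v \<or> green Q v" for v
  proof -
    have vm: "v \<in> mutable Q" and ne: "frozen Q \<noteq> {}" using h unfolding red_def green_def by auto
    show ?thesis
    proof (cases "v = j")
      case True
      have "\<forall>u\<in>frozen Q. bmat (mutate j Q) v u = - bmat Q v u" using True jf by (auto simp: mut_b)
      then show ?thesis using h vm unfolding R R' mm by auto
    next
      case False
      show ?thesis
      proof (cases "\<forall>u\<in>frozen Q. bmat (mutate j Q) v u = bmat Q v u")
        case True
        then show ?thesis using h vm unfolding R R' mm by auto
      next
        case c: False
        show ?thesis using gen[OF vm False ne c] .
      qed
    qed
  qed
  have p2: "(\<forall>u\<in>frozen Q. bmat (mutate j Q) k u = bmat Q k u) \<or> red (mutate j Q) k \<or> green (mutate j Q) k"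
    if k: "k \<in> mutable Q" "\<not> (red Q k \<or> green Q k)" for k
  proof (cases "\<forall>u\<in>frozen Q. bmat (mutate j Q) k u = bmat Q k u")
    case False
    hence ne: "frozen Q \<noteq> {}" by auto
    have "k \<noteq> j" using k assms(5) by auto
    then show ?thesis using gen[OF k(1) _ ne False] by auto
  qed simp
  show ?thesis using p1 p2 by blast
qed

end
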